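(* Let $F_n:[0,+\infty)\to\mathcal L(X,X)$, $n\ge1$, be continuous functions such that $\|F_n(t)\|_{\mathcal L(X,X)}\le R_F$ for all $t\ge0$, $n\ge1$ and some $R_F>0$, and such that for every $T>0$, $\int_0^tF_n(r)\,dr\to0$ in $\mathcal L(X,X)$ as $n\to+\infty$, uniformly with respect to $t\in[0,T]$. Then for every $T>0$, $$\lim_{n\to+\infty}\int_s^tF_n(r)S_0(r-s)\bar u\,dr=0\quad\text{in }X,$$ uniformly with respect to $\bar u$ in bounded subsets of $X$, $t\in[0,T]$ and $s\in[0,t]$.
   Context: $X$ is a Banach space. $A_0$ is a linear operator in $X$ such that $-A_0$ generates an analytic $C_0$-semigroup $\{S_0(t)\}_{t\ge0}$ on $X$ satisfying $\|S_0(t)\|_{\mathcal L(X,X)}\le M_0$ for $t\ge0$ and $\|A_0S_0(t)\|_{\mathcal L(X,X)}\le M_1t^{-1}$ for $t>0$, for some constants $M_0,M_1>0$. *)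

theory Defs
  imports "HOL-Analysis.Analysis"
begin

definition C0_semigroup :: "(real \<Rightarrow> 'a::banach \<Rightarrow>\<^sub>L 'a) \<Rightarrow> bool" where
  "C0_semigroup S \<longleftrightarrow>
     S 0 = id_blinfun \<and>
     (\<forall>t\<ge>0. \<forall>s\<ge>0. S (t + s) = S t o\<^sub>L S s) \<and>
     (\<forall>x. continuous_on {0..} (\<lambda>t. S t x))"

definition is_generator ::
  "(real \<Rightarrow> 'a::banach \<Rightarrow>\<^sub>L 'a) \<Rightarrow> ('a \<Rightarrow> 'a) \<Rightarrow> 'a set \<Rightarrow> bool" where
  "is_generator S G D \<longleftrightarrow>
     D = {x. \<exists>y. ((\<lambda>h. (S h x - x) /\<^sub>R h) \<longlongrightarrow> y) (at_right 0)} \<and>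
     (\<forall>x\<in>D. ((\<lambda>h. (S h x - x) /\<^sub>R h) \<longlongrightarrow> G x) (at_right 0))"

text \<open>Analytic (holomorphic) semigroup, in the real-Banach-space characterization
  (Pazy, Thm 2.5.2(d)): a uniformly bounded C0-semigroup which is differentiable for
  t > 0 (S t maps X into the domain of the generator) with
  norm (G S(t)) \<le> C / t for t > 0.\<close>
definition analytic_C0_semigroup ::
  "(real \<Rightarrow> 'a::banach \<Rightarrow>\<^sub>L 'a) \<Rightarrow> ('a \<Rightarrow> 'a) \<Rightarrow> 'a set \<Rightarrow> bool" where
  "analytic_C0_semigroup S G D \<longleftrightarrow>
     C0_semigroup S \<and> is_generator S G D \<and>
     (\<exists>M. \<forall>t\<ge>0. norm (S t) \<le> M) \<and>
     (\<forall>t>0. \<forall>x. S t x \<in> D) \<and>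
     (\<exists>C. \<forall>t>0. \<forall>x. norm (G (S t x)) \<le> C / t * norm x)"

end

theory Submission imports Defs begin

lemma sg_comm:
  assumes C0: "C0_semigroup S" and gen: "is_generator S G D"
    and w: "w \<in> D" and a: "a \<ge> 0" and Saw: "S a w \<in> D"
  shows "G (S a w) = S a (G w)"
proof -
  have wl: "((\<lambda>h. (S h w - w) /\<^sub>R h) \<longlongrightarrow> G w) (at_right 0)"
    using gen w unfolding is_generator_def by blast
  have l1: "((\<lambda>h. S a ((S h w - w) /\<^sub>R h)) \<longlongrightarrow> S a (G w)) (at_right 0)"
    by (rule blinfun.tendsto[OF tendsto_const wl])
  have l2: "((\<lambda>h. (S h (S a w) - S a w) /\<^sub>R h) \<longlongrightarrow> G (S a w)) (at_right 0)"
    using gen Saw unfolding is_generator_def by blast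
  have ev: "\<forall>\<^sub>F h in at_right 0. S a ((S h w - w) /\<^sub>R h) = (S h (S a w) - S a w) /\<^sub>R h"
  proof -
    have *: "S a ((S h w - w) /\<^sub>R h) = (S h (S a w) - S a w) /\<^sub>R h" if "h > 0" for h :: real
    proof -
      have "S (a + h) = S a o\<^sub>L S h" "S (h + a) = S h o\<^sub>L S a"
        using C0 a that unfolding C0_semigroup_def by auto
      hence "S a (S h w) = S h (S a w)" by (metis add.commute blinfun_apply_blinfun_compose)
      thus ?thesis by (simp add: blinfun.scaleR_right blinfun.diff_right)
    qed
    show ?thesis by (rule eventually_mono[OF eventually_at_right_less]) (use * in auto)
  qed
  have "((\<lambda>h. (S h (S a w) - S a w) /\<^sub>R h) \<longlongrightarrow> S a (G w)) (at_right 0)"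
    using tendsto_cong[OF ev] l1 by simp
  thus ?thesis using l2 tendsto_unique[OF trivial_limit_at_right_real] by blast
qed

lemma sg_semi:
  assumes C0: "C0_semigroup S" and "a \<ge> 0" "b \<ge> 0"
  shows "S a (S b x) = S (a + b) x"
  using assms unfolding C0_semigroup_def by auto

lemma norm_quot_eq:
  fixes X Dv :: "'a::real_normed_vector"
  assumes "h > 0"
  shows "norm (X /\<^sub>R h - Dv) = norm (X - h *\<^sub>R Dv) / h"
proof -
  have "X - h *\<^sub>R Dv = h *\<^sub>R (X /\<^sub>R h - Dv)"
    using assms by (simp add: scaleR_right_diff_distrib)
  hence "norm (X - h *\<^sub>R Dv) = h * norm (X /\<^sub>R h - Dv)" using assms by simp
  thus ?thesis using assms by simp
qed

lemma sg_deriv: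
  assumes C0: "C0_semigroup S" and gen: "is_generator S G D"
    and bnd: "\<forall>t\<ge>0. norm (S t) \<le> M" and inD: "\<forall>t>0. \<forall>x. S t x \<in> D"
    and tau: "\<tau> > 0"
  shows "((\<lambda>r. S r u) has_vector_derivative G (S \<tau> u)) (at \<tau>)"
proof -
  define Dv where "Dv = G (S \<tau> u)"
  have M: "M \<ge> 0" using bnd[rule_format, of 0] norm_ge_zero[of "S 0"] by linarith
  define q where "q = (\<lambda>y. norm ((S y u - S \<tau> u) - (y - \<tau>) *\<^sub>R Dv) / norm (y - \<tau>))"
  have R: "(q \<longlongrightarrow> 0) (at_right \<tau>)"
  proof -
    have lim: "((\<lambda>h. (S h (S \<tau> u) - S \<tau> u) /\<^sub>R h) \<longlongrightarrow> Dv) (at_right 0)"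
      using gen inD tau unfolding is_generator_def Dv_def by blast
    have "((\<lambda>h. (S h (S \<tau> u) - S \<tau> u) /\<^sub>R h - Dv) \<longlongrightarrow> Dv - Dv) (at_right 0)"
      by (rule tendsto_diff[OF lim tendsto_const])
    hence l0: "((\<lambda>h. norm ((S h (S \<tau> u) - S \<tau> u) /\<^sub>R h - Dv)) \<longlongrightarrow> 0) (at_right 0)"
      using tendsto_norm_zero by fastforce
    have *: "norm ((S h (S \<tau> u) - S \<tau> u) /\<^sub>R h - Dv) = q (h + \<tau>)" if "h > 0" for h :: real
    proof -
      have "S h (S \<tau> u) = S (h + \<tau>) u" using sg_semi[OF C0] that tau by simp
      thus ?thesis unfolding q_def using norm_quot_eq[OF that] that by simp
    qed
    have ev: "\<forall>\<^sub>F h in at_right 0. norm ((S h (S \<tau> u) - S \<tau> u) /\<^sub>R h - Dv) = q (h + \<tau>)"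
      by (rule eventually_mono[OF eventually_at_right_less]) (use * in auto)
    show ?thesis unfolding filterlim_at_right_to_0[of q _ \<tau>]
      using tendsto_cong[OF ev] l0 by simp
  qed
  have L: "(q \<longlongrightarrow> 0) (at_left \<tau>)"
  proof -
    define a where "a = \<tau> / 2"
    have a: "a > 0" "a + a = \<tau>" using tau unfolding a_def by auto
    define w where "w = S a u"
    have wD: "w \<in> D" "S a w \<in> D" using inD a unfolding w_def by auto
    have Saw: "S a w = S \<tau> u" unfolding w_def using sg_semi[OF C0, of a a] a by simp
    have Dv_eq: "Dv = S a (G w)" unfolding Dv_def using sg_comm[OF C0 gen wD(1) _ wD(2)] a Saw by simp
    have qlim: "((\<lambda>h. (S h w - w) /\<^sub>R h) \<longlongrightarrow> G w) (at_right 0)"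
      using gen wD unfolding is_generator_def by blast
    have "((\<lambda>h. (S h w - w) /\<^sub>R h - G w) \<longlongrightarrow> G w - G w) (at_right 0)"
      by (rule tendsto_diff[OF qlim tendsto_const])
    hence ql0: "((\<lambda>h. M * norm ((S h w - w) /\<^sub>R h - G w)) \<longlongrightarrow> 0) (at_right 0)"
      using tendsto_mult_right_zero tendsto_norm_zero by fastforce
    have cont: "continuous_on {0..} (\<lambda>t. S t (G w))" using C0 unfolding C0_semigroup_def by blast
    have ev_a: "\<forall>\<^sub>F h in at_right 0. h < a"
      using a(1) eventually_at_right_field by blast
    have alim: "((\<lambda>h. a - h) \<longlongrightarrow> a) (at_right 0)"
      using tendsto_diff[OF tendsto_const[of a] tendsto_ident_at[of 0 "{0<..}"]] by simp
    have "((\<lambda>h. S (a - h) (G w)) \<longlongrightarrow> S a (G w)) (at_right 0)"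
    proof (rule continuous_on_tendsto_compose[OF cont alim])
      show "\<forall>\<^sub>F h in at_right 0. a - h \<in> {0..}" using ev_a by (rule eventually_mono) auto
    qed (use a in auto)
    hence "((\<lambda>h. S (a - h) (G w) - S a (G w)) \<longlongrightarrow> S a (G w) - S a (G w)) (at_right 0)"
      by (rule tendsto_diff[OF _ tendsto_const])
    hence cl0: "((\<lambda>h. norm (S (a - h) (G w) - S a (G w))) \<longlongrightarrow> 0) (at_right 0)"
      using tendsto_norm_zero by fastforce
    have sum0: "((\<lambda>h. M * norm ((S h w - w) /\<^sub>R h - G w) + norm (S (a - h) (G w) - S a (G w))) \<longlongrightarrow> 0) (at_right 0)"
      using tendsto_add[OF ql0 cl0] by simp
    have *: "norm (q (\<tau> - h)) \<le> M * norm ((S h w - w) /\<^sub>R h - G w) + norm (S (a - h) (G w) - S a (G w))"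
      if h: "0 < h" "h < a" for h
    proof -
      define Q where "Q = (S h w - w) /\<^sub>R h"
      have e1: "S (\<tau> - h) u = S (a - h) w" unfolding w_def using sg_semi[OF C0, of "a - h" a] h a by simp
      have e2: "S \<tau> u = S (a - h) (S h w)" using sg_semi[OF C0, of "a - h" h w] h a Saw by simp
      have e3: "S h w - w = h *\<^sub>R Q" unfolding Q_def using h by simp
      have "S (\<tau> - h) u - S \<tau> u - (\<tau> - h - \<tau>) *\<^sub>R Dv = h *\<^sub>R (Dv - S (a - h) Q)"
      proof -
        have "S (a - h) (S h w) - S (a - h) w = h *\<^sub>R S (a - h) Q"
          by (simp add: blinfun.diff_right[symmetric] e3 blinfun.scaleR_right)
        thus ?thesis unfolding e1 e2 by (simp add: algebra_simps)
      qed
      hence "q (\<tau> - h) = norm (Dv - S (a - h) Q)" unfolding q_def using h by simp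
      also have "Dv - S (a - h) Q = S (a - h) (G w - Q) + (S a (G w) - S (a - h) (G w))"
        unfolding Dv_eq by (simp add: blinfun.diff_right algebra_simps)
      also have "norm \<dots> \<le> norm (S (a - h) (G w - Q)) + norm (S a (G w) - S (a - h) (G w))"
        by (rule norm_triangle_ineq)
      also have "norm (S (a - h) (G w - Q)) \<le> M * norm (Q - G w)"
      proof -
        have "norm (S (a - h) (G w - Q)) \<le> norm (S (a - h)) * norm (G w - Q)" by (rule norm_blinfun)
        also have "\<dots> \<le> M * norm (G w - Q)" using bnd h by (intro mult_right_mono) auto
        finally show ?thesis by (simp add: norm_minus_commute)
      qed
      moreover have "q (\<tau> - h) \<ge> 0" unfolding q_def by simp
      ultimately show ?thesis unfolding Q_def by (simp add: norm_minus_commute)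
    qed
    have ev: "\<forall>\<^sub>F h in at_right 0. norm (q (\<tau> - h)) \<le> M * norm ((S h w - w) /\<^sub>R h - G w) + norm (S (a - h) (G w) - S a (G w))"
      using eventually_conj[OF ev_a eventually_at_right_less] by (rule eventually_mono) (use * in auto)
    have "((\<lambda>h. q (\<tau> - h)) \<longlongrightarrow> 0) (at_right 0)"
      by (rule Lim_null_comparison[OF ev sum0])
    thus ?thesis unfolding filterlim_at_left_to_right filterlim_at_right_to_0[of _ _ "- \<tau>"] by simp
  qed
  have "(q \<longlongrightarrow> 0) (at \<tau>)" using L R filterlim_at_split by blast
  thus ?thesis unfolding has_vector_derivative_def has_derivative_iff_norm Dv_def[symmetric] q_def
    by (simp add: bounded_linear_scaleR_left)
qed

lemma main_est:
  fixes S0 :: "real \<Rightarrow> 'a::banach \<Rightarrow>\<^sub>L 'a"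
    and A0 :: "'a \<Rightarrow> 'a" and Fn :: "real \<Rightarrow> ('a \<Rightarrow>\<^sub>L 'a)"
  assumes analytic: "analytic_C0_semigroup S0 (\<lambda>x. - A0 x) DA0"
    and S0_bound: "\<forall>t\<ge>0. norm (S0 t) \<le> M0"
    and AS0_bound: "\<forall>t>0. \<forall>x. norm (A0 (S0 t x)) \<le> M1 / t * norm x"
    and M1: "M1 > 0"
    and Fc: "continuous_on {0..} Fn"
    and Fb: "\<forall>t\<ge>0. norm (Fn t) \<le> R_F"
    and Gb: "\<forall>r\<in>{0..T}. norm (integral {0..r} Fn) \<le> \<eta>"
    and eta: "\<eta> \<ge> 0" and uK: "norm u \<le> K"
    and st: "0 \<le> s" "s \<le> t" "t \<le> T" and delta: "\<delta> > 0"
  shows "norm (integral {s..t} (\<lambda>r. Fn r (S0 (r - s) u))) \<le> R_F * (M0 * K) * \<delta> + \<eta> * K * (2 * M0 + T * M1 / \<delta>)"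
proof -
  have C0: "C0_semigroup S0" and gen: "is_generator S0 (\<lambda>x. - A0 x) DA0"
    and inD: "\<forall>t>0. \<forall>x. S0 t x \<in> DA0"
    using analytic unfolding analytic_C0_semigroup_def by auto
  have M0: "M0 \<ge> 0" using S0_bound[rule_format, of 0] norm_ge_zero[of "S0 0"] by linarith
  have RF: "R_F \<ge> 0" using Fb[rule_format, of 0] norm_ge_zero[of "Fn 0"] by linarith
  have K: "K \<ge> 0" using uK norm_ge_zero[of u] by linarith
  have T: "T \<ge> 0" using st by linarith
  define f where "f = (\<lambda>r. Fn r (S0 (r - s) u))"
  define g where "g = (\<lambda>r. S0 (r - s) u)"
  have gc: "continuous_on {s..t} g"
  proof -
    have "continuous_on {0..} (\<lambda>t. S0 t u)" using C0 unfolding C0_semigroup_def by blast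
    moreover have "continuous_on {s..t} (\<lambda>r. r - s)" by (intro continuous_intros)
    ultimately show ?thesis unfolding g_def by (rule continuous_on_compose2) auto
  qed
  have Fc': "continuous_on {s..t} Fn" using continuous_on_subset[OF Fc] st by auto
  have fc: "continuous_on {s..t} f" unfolding f_def
    using bounded_bilinear.continuous_on[OF bounded_bilinear_blinfun_apply Fc' gc] unfolding g_def .
  have gb: "norm (g r) \<le> M0 * K" if "r \<in> {s..t}" for r
  proof -
    have "norm (g r) \<le> norm (S0 (r - s)) * norm u" unfolding g_def by (rule norm_blinfun)
    also have "\<dots> \<le> M0 * K" using S0_bound that uK M0 by (intro mult_mono) auto
    finally show ?thesis .
  qed
  have fb: "norm (f r) \<le> R_F * (M0 * K)" if "r \<in> {s..t}" for r
  proof -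
    have "norm (f r) \<le> norm (Fn r) * norm (g r)" unfolding f_def g_def by (rule norm_blinfun)
    also have "\<dots> \<le> R_F * (M0 * K)" using Fb that gb[OF that] RF st by (intro mult_mono) auto
    finally show ?thesis .
  qed
  have rest: "0 \<le> \<eta> * K * (2 * M0 + T * M1 / \<delta>)"
    using eta K M0 T M1 delta by (intro mult_nonneg_nonneg add_nonneg_nonneg) auto
  show ?thesis
  proof (cases "t - s \<le> \<delta>")
    case True
    have "norm (integral {s..t} f) \<le> R_F * (M0 * K) * (t - s)"
      by (rule integral_bound[OF st(2) fc fb])
    also have "\<dots> \<le> R_F * (M0 * K) * \<delta>" using True RF M0 K by (intro mult_left_mono) auto
    finally show ?thesis unfolding f_def using rest by linarith
  next
    case False
    define c where "c = s + \<delta>"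
    have c: "s \<le> c" "c \<le> t" "s < c" using False delta unfolding c_def by auto
    have split: "integral {s..c} f + integral {c..t} f = integral {s..t} f"
      by (rule Henstock_Kurzweil_Integration.integral_combine[OF c(1) c(2) integrable_continuous_interval[OF fc]])
    have p1: "norm (integral {s..c} f) \<le> R_F * (M0 * K) * \<delta>"
    proof -
      have "norm (integral {s..c} f) \<le> R_F * (M0 * K) * (c - s)"
        by (rule integral_bound[OF c(1) continuous_on_subset[OF fc]]) (use c fb in auto)
      thus ?thesis unfolding c_def by simp
    qed
    define Gn where "Gn = (\<lambda>r. integral {0..r} Fn)"
    define g' where "g' = (\<lambda>r. - A0 (S0 (r - s) u))"
    have Fint: "Fn integrable_on {0..t}"
      by (rule integrable_continuous_interval[OF continuous_on_subset[OF Fc]]) auto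
    have Gc: "continuous_on {c..t} Gn"
      using continuous_on_subset[OF indefinite_integral_continuous_1[OF Fint]] c st unfolding Gn_def by auto
    have gc': "continuous_on {c..t} g" using continuous_on_subset[OF gc] c by auto
    have Gd: "(Gn has_vector_derivative Fn x) (at x)" if "x \<in> {c<..<t}" for x
    proof -
      have "(Gn has_vector_derivative Fn x) (at x within {0..t})"
        unfolding Gn_def by (rule integral_has_vector_derivative[OF continuous_on_subset[OF Fc]]) (use that c st in auto)
      moreover have "at x within {0..t} = at x" using that c st by (intro at_within_Icc_at) auto
      ultimately show ?thesis by simp
    qed
    have gd: "(g has_vector_derivative g' x) (at x)" if "x \<in> {c<..<t}" for x
    proof -
      have "x - s > 0" using that c by auto
      from sg_deriv[OF C0 gen S0_bound inD this, of u]
      have d2: "((\<lambda>r. S0 r u) has_vector_derivative - A0 (S0 (x - s) u)) (at ((\<lambda>r. r - s) x))" by simp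
      have d1: "((\<lambda>r. r - s) has_vector_derivative 1) (at x)"
        by (auto intro!: derivative_eq_intros)
      have "(((\<lambda>r. S0 r u) \<circ> (\<lambda>r. r - s)) has_vector_derivative (1::real) *\<^sub>R (- A0 (S0 (x - s) u))) (at x)"
        by (rule vector_diff_chain_at[OF d1 d2])
      thus ?thesis unfolding g_def g'_def by (simp add: o_def)
    qed
    have fint: "(\<lambda>x. Fn x (g x)) integrable_on {c..t}"
      using integrable_continuous_interval[OF continuous_on_subset[OF fc]] c unfolding f_def g_def by auto
    have bbf: "bounded_bilinear (\<lambda>x (y::'a \<Rightarrow>\<^sub>L 'a). blinfun_apply y x)"
      by (rule bounded_bilinear.flip[OF bounded_bilinear_blinfun_apply])
    have Jint: "(\<lambda>x. Gn x (g' x)) integrable_on {c..t}"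
      using integrable_by_parts_interior_strong[OF bbf, of "{}" c t g Gn g' Fn] gc' Gc gd Gd fint c
      by auto
    define J where "J = integral {c..t} (\<lambda>x. Gn x (g' x))"
    have "(f has_integral (Gn t (g t) - Gn c (g c) - J)) {c..t}"
    proof -
      have "((\<lambda>x. Fn x (g x)) has_integral (Gn t (g t) - Gn c (g c) - J)) {c..t}"
        by (rule integration_by_parts_interior[OF bounded_bilinear_blinfun_apply c(2) Gc gc' Gd gd])
           (use Jint in \<open>auto simp: J_def\<close>)
      thus ?thesis unfolding f_def g_def .
    qed
    hence p2eq: "integral {c..t} f = Gn t (g t) - Gn c (g c) - J" by (rule integral_unique)
    have Gnb: "norm (Gn r) \<le> \<eta>" if "r \<in> {c..t}" for r
      using Gb that c st unfolding Gn_def by auto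
    have Ggb: "norm (Gn r (g r)) \<le> \<eta> * (M0 * K)" if "r \<in> {c..t}" for r
    proof -
      have "norm (Gn r (g r)) \<le> norm (Gn r) * norm (g r)" by (rule norm_blinfun)
      also have "\<dots> \<le> \<eta> * (M0 * K)" using Gnb[OF that] gb that c eta by (intro mult_mono) auto
      finally show ?thesis .
    qed
    have Jb: "norm J \<le> \<eta> * (M1 / \<delta> * K) * T"
    proof -
      have pb: "norm (Gn x (g' x)) \<le> \<eta> * (M1 / \<delta> * K)" if "x \<in> cbox c t" for x
      proof -
        have x: "x \<in> {c..t}" using that by auto
        have xs: "x - s \<ge> \<delta>" "x - s > 0" using x c delta unfolding c_def by auto
        have "norm (g' x) \<le> M1 / (x - s) * norm u" unfolding g'_def using AS0_bound xs by simp
        also have "\<dots> \<le> M1 / \<delta> * K"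
          using xs M1 delta K uK by (intro mult_mono divide_left_mono) auto
        finally have g'b: "norm (g' x) \<le> M1 / \<delta> * K" .
        have "norm (Gn x (g' x)) \<le> norm (Gn x) * norm (g' x)" by (rule norm_blinfun)
        also have "\<dots> \<le> \<eta> * (M1 / \<delta> * K)" using Gnb[OF x] g'b eta by (intro mult_mono) auto
        finally show ?thesis .
      qed
      have hi: "((\<lambda>x. Gn x (g' x)) has_integral J) (cbox c t)"
        using Jint unfolding J_def by (simp add: cbox_interval integrable_integral)
      have "norm J \<le> \<eta> * (M1 / \<delta> * K) * (t - c)"
        using has_integral_bound[OF _ hi pb] eta M1 delta K c by simp
      also have "\<dots> \<le> \<eta> * (M1 / \<delta> * K) * T"
        using c st eta M1 delta K by (intro mult_left_mono) auto
      finally show ?thesis .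
    qed
    have "norm (integral {c..t} f) \<le> \<eta> * (M0 * K) + \<eta> * (M0 * K) + \<eta> * (M1 / \<delta> * K) * T"
    proof -
      have "norm (integral {c..t} f) \<le> norm (Gn t (g t)) + norm (Gn c (g c)) + norm J"
        unfolding p2eq by (smt (verit) norm_triangle_ineq4)
      moreover have "t \<in> {c..t}" "c \<in> {c..t}" using c by auto
      ultimately show ?thesis using Ggb Jb by (meson add_mono order_trans)
    qed
    moreover have "\<eta> * (M0 * K) + \<eta> * (M0 * K) + \<eta> * (M1 / \<delta> * K) * T = \<eta> * K * (2 * M0 + T * M1 / \<delta>)"
      by (simp add: algebra_simps)
    ultimately have p2: "norm (integral {c..t} f) \<le> \<eta> * K * (2 * M0 + T * M1 / \<delta>)" by simp
    have "norm (integral {s..t} f) \<le> norm (integral {s..c} f) + norm (integral {c..t} f)"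
      unfolding split[symmetric] by (rule norm_triangle_ineq)
    thus ?thesis using p1 p2 unfolding f_def by linarith
  qed
qed

theorem lemma3p3:
  fixes S0 :: "real \<Rightarrow> 'a::banach \<Rightarrow>\<^sub>L 'a"
    and A0 :: "'a \<Rightarrow> 'a" and DA0 :: "'a set"
    and M0 M1 R_F :: real
    and F :: "nat \<Rightarrow> real \<Rightarrow> ('a \<Rightarrow>\<^sub>L 'a)"
  assumes analytic: "analytic_C0_semigroup S0 (\<lambda>x. - A0 x) DA0"
    and M0_pos: "M0 > 0" and M1_pos: "M1 > 0"
    and S0_bound: "\<forall>t\<ge>0. norm (S0 t) \<le> M0"
    and AS0_bound: "\<forall>t>0. \<forall>x. norm (A0 (S0 t x)) \<le> M1 / t * norm x"
    and F_cont: "\<forall>n\<ge>1. continuous_on {0..} (F n)"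
    and R_F_pos: "R_F > 0"
    and F_bound: "\<forall>n\<ge>1. \<forall>t\<ge>0. norm (F n t) \<le> R_F"
    and F_int: "\<forall>T>0. \<forall>\<epsilon>>0. \<exists>N. \<forall>n\<ge>N. n \<ge> 1 \<longrightarrow>
                  (\<forall>t\<in>{0..T}. norm (integral {0..t} (F n)) < \<epsilon>)"
  shows "\<forall>T>0. \<forall>B. bounded B \<longrightarrow> (\<forall>\<epsilon>>0. \<exists>N. \<forall>n\<ge>N. \<forall>u\<in>B. \<forall>t\<in>{0..T}. \<forall>s\<in>{0..t}.
           norm (integral {s..t} (\<lambda>r. F n r (S0 (r - s) u))) < \<epsilon>)"
proof (intro allI impI)
  fix T :: real and B :: "'a set" and \<epsilon> :: real
  assume T: "T > 0" and B: "bounded B" and e: "\<epsilon> > 0"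
  obtain K where K: "K > 0" "\<forall>u\<in>B. norm u \<le> K" using B bounded_pos by blast
  define \<delta> where "\<delta> = \<epsilon> / (4 * (R_F * (M0 * K)))"
  have d: "\<delta> > 0" unfolding \<delta>_def using e R_F_pos M0_pos K by simp
  have d1: "R_F * (M0 * K) * \<delta> = \<epsilon> / 4" unfolding \<delta>_def using R_F_pos M0_pos K by simp
  define Q where "Q = K * (2 * M0 + T * M1 / \<delta>)"
  have Q: "Q > 0" unfolding Q_def using K M0_pos T M1_pos d by (intro mult_pos_pos add_pos_nonneg) auto
  define \<eta> where "\<eta> = \<epsilon> / (4 * Q)"
  have eta: "\<eta> > 0" unfolding \<eta>_def using e Q by simp
  have eQ: "\<eta> * Q = \<epsilon> / 4" unfolding \<eta>_def using Q by simp
  obtain N where N: "\<forall>n\<ge>N. n \<ge> 1 \<longrightarrow> (\<forall>t\<in>{0..T}. norm (integral {0..t} (F n)) < \<eta>)"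
    using F_int T eta by blast
  show "\<exists>N. \<forall>n\<ge>N. \<forall>u\<in>B. \<forall>t\<in>{0..T}. \<forall>s\<in>{0..t}.
           norm (integral {s..t} (\<lambda>r. F n r (S0 (r - s) u))) < \<epsilon>"
  proof (intro exI[of _ "max N 1"] allI impI ballI)
    fix n u t s
    assume n: "max N 1 \<le> n" and u: "u \<in> B" and t: "t \<in> {0..T}" and s: "s \<in> {0..t}"
    have n1: "n \<ge> 1" "n \<ge> N" using n by auto
    have "norm (integral {s..t} (\<lambda>r. F n r (S0 (r - s) u))) \<le> R_F * (M0 * K) * \<delta> + \<eta> * K * (2 * M0 + T * M1 / \<delta>)"
    proof (rule main_est[OF analytic S0_bound AS0_bound M1_pos])
      show "continuous_on {0..} (F n)" using F_cont n1 by blast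
      show "\<forall>t\<ge>0. norm (F n t) \<le> R_F" using F_bound n1 by blast
      show "\<forall>r\<in>{0..T}. norm (integral {0..r} (F n)) \<le> \<eta>" using N n1 by (auto intro: less_imp_le)
    qed (use eta K u t s d in auto)
    also have "\<dots> = \<epsilon> / 4 + \<epsilon> / 4" using d1 eQ unfolding Q_def by (metis mult.assoc)
    finally show "norm (integral {s..t} (\<lambda>r. F n r (S0 (r - s) u))) < \<epsilon>" using e by linarith
  qed
qed

end
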